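(* Let $p\ge2$ and $c>0$ be such that $N_p^c$ exists, and suppose that for every $c'\in(0,c]$ the set $N_p^{c'}$ has the star property: for every $x\in N_p^{c'}$ and every $\lambda\in[0,1)$, $\lambda x\in\mathrm{Int}(N_p^{c'})$. Then $V_p$ is radially increasing on $N_p^c$: for every $x\in N_p^c\setminus\{0\}$ and all $0\le\lambda_1<\lambda_2\le1$, $V_p(\lambda_1x)<V_p(\lambda_2 x)$.
   Context: Let $f:\mathbb{R}^n\to\mathbb{R}^n$ be real-analytic with $f(0)=0$, and assume all eigenvalues of $A=\frac{\partial f}{\partial x}(0)$ have negative real parts. $\|\cdot\|$ is the Euclidean norm. Let $V$ be the real-analytic function on a neighborhood of $0$ with $\langle\nabla V(x),f(x)\rangle=-\|x\|^2$, $V(0)=0$, and for $p\ge 2$ let $V_p$ be the Taylor polynomial of $V$ at $0$ of degree $p$ (terms of degrees $2,\dots,p$). Let $G_p$ be the maximal domain (connected open set) containing $0$ such that $V_p(x)>0$ and $\langle\nabla V_p(x),f(x)\rangle<0$ for all $x\in G_p\setminus\{0\}$. A closed connected set $S\subset\mathbb{R}^n$ is called $(p,c)$-admissible if: $0\in\mathrm{Int}(S)$; $V_p(x)<c$ for all $x\in\mathrm{Int}(S)$; $V_p(x)=c$ for all $x\in\partial S$; and $S$ is compact with $S\subset G_p$. For given $p,c$ there is at most one such set; when it exists it is denoted $N_p^c$. *)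

theory Defs
  imports "HOL-Analysis.Analysis"
begin

text \<open>Real-analyticity on a set U of the Euclidean space real^'n: around every point a of U
  the function is given by an (unconditionally, hence absolutely) convergent multivariate
  power series in the coordinates, indexed by multi-indices alpha :: 'n => nat.\<close>
definition real_analytic_on :: "(real^'n \<Rightarrow> 'b::real_normed_vector) \<Rightarrow> (real^'n) set \<Rightarrow> bool" where
  "real_analytic_on g U \<longleftrightarrow>
     (\<forall>a\<in>U. \<exists>r>0. ball a r \<subseteq> U \<and> (\<exists>co :: ('n \<Rightarrow> nat) \<Rightarrow> 'b.
        \<forall>x\<in>ball a r. ((\<lambda>\<alpha>. (\<Prod>i\<in>UNIV. (x$i - a$i) ^ \<alpha> i) *\<^sub>R co \<alpha>) has_sum g x) UNIV))"

definition cplx_eigenvalue :: "real^'n^'n \<Rightarrow> complex \<Rightarrow> bool" where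
  "cplx_eigenvalue A \<mu> \<longleftrightarrow>
     (\<exists>v :: complex^'n. v \<noteq> 0 \<and> (\<chi> i j. complex_of_real (A$i$j)) *v v = \<mu> *s v)"

text \<open>Taylor polynomial of V at 0, terms of degrees 2..p. The degree-k homogeneous term
  evaluated at x is (1/k!) d^k/dt^k V(t x) at t = 0.\<close>
definition taylor_poly :: "(real^'n \<Rightarrow> real) \<Rightarrow> nat \<Rightarrow> real^'n \<Rightarrow> real" where
  "taylor_poly V p x = (\<Sum>k=2..p. (deriv ^^ k) (\<lambda>t. V (t *\<^sub>R x)) 0 / fact k)"

definition orbital_deriv :: "(real^'n \<Rightarrow> real^'n) \<Rightarrow> (real^'n \<Rightarrow> real) \<Rightarrow> real^'n \<Rightarrow> real" where
  "orbital_deriv f W x = frechet_derivative W (at x) (f x)"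

definition Gp :: "(real^'n \<Rightarrow> real^'n) \<Rightarrow> (real^'n \<Rightarrow> real) \<Rightarrow> nat \<Rightarrow> (real^'n) set" where
  "Gp f V p = \<Union>{D. open D \<and> connected D \<and> 0 \<in> D \<and>
      (\<forall>x\<in>D - {0}. taylor_poly V p x > 0 \<and> orbital_deriv f (taylor_poly V p) x < 0)}"

definition admissible :: "(real^'n \<Rightarrow> real^'n) \<Rightarrow> (real^'n \<Rightarrow> real) \<Rightarrow> nat \<Rightarrow> real \<Rightarrow> (real^'n) set \<Rightarrow> bool" where
  "admissible f V p c S \<longleftrightarrow>
     closed S \<and> connected S \<and> 0 \<in> interior S \<and>
     (\<forall>x\<in>interior S. taylor_poly V p x < c) \<and>
     (\<forall>x\<in>frontier S. taylor_poly V p x = c) \<and>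
     compact S \<and> S \<subseteq> Gp f V p"

definition Nset :: "(real^'n \<Rightarrow> real^'n) \<Rightarrow> (real^'n \<Rightarrow> real) \<Rightarrow> nat \<Rightarrow> real \<Rightarrow> (real^'n) set" where
  "Nset f V p c = (THE S. admissible f V p c S)"

definition star_prop :: "(real^'n) set \<Rightarrow> bool" where
  "star_prop S \<longleftrightarrow> (\<forall>x\<in>S. \<forall>t\<in>{0..<1::real}. t *\<^sub>R x \<in> interior S)"

end

theory Submission
  imports Defs
begin
lemma diffs_funpow: "(diffs ^^ k) c n = fact (n+k) / fact n * (c (n+k) :: real)"
proof (induction k arbitrary: n)
  case 0 then show ?case by simp
next
  case (Suc k)
  have "(diffs ^^ Suc k) c n = of_nat (Suc n) * (diffs ^^ k) c (Suc n)"
    by (simp add: diffs_def)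
  also have "\<dots> = of_nat (Suc n) * (fact (Suc n + k) / fact (Suc n) * c (Suc n + k))"
    using Suc by simp
  also have "\<dots> = fact (n + Suc k) / fact n * c (n + Suc k)"
  proof -
    have e: "Suc n + k = n + Suc k" by simp
    have "fact (Suc n) = (of_nat (Suc n) :: real) * fact n" by (simp add: fact_Suc)
    then show ?thesis unfolding e by (simp del: of_nat_Suc fact_Suc)
  qed
  finally show ?case .
qed

lemma powser_higher_deriv:
  fixes g :: "real \<Rightarrow> real" and c :: "nat \<Rightarrow> real"
  assumes R: "R > 0" and sm: "\<And>t. \<bar>t\<bar> < R \<Longrightarrow> (\<lambda>k. c k * t^k) sums g t"
  shows "(deriv ^^ k) g 0 = fact k * c k"
proof -
  have summ0: "\<forall>t. \<bar>t\<bar> < R \<longrightarrow> summable (\<lambda>j. (diffs ^^ k) c j * t^j)" for k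
  proof (induction k)
    case 0 then show ?case using sm sums_summable by auto
  next
    case (Suc k)
    show ?case proof (intro allI impI)
    fix t :: real assume t: "\<bar>t\<bar> < R"
    have "summable (\<lambda>j. diffs ((diffs ^^ k) c) j * t^j)"
      by (rule termdiff_converges[where K=R]) (use t Suc in auto)
    then show "summable (\<lambda>j. (diffs ^^ Suc k) c j * t^j)" by simp
  qed
  qed
  have summ: "\<And>t. \<bar>t\<bar> < R \<Longrightarrow> summable (\<lambda>j. (diffs ^^ k) c j * t^j)" for k
    using summ0 by blast
  have main: "\<forall>t. \<bar>t\<bar> < R \<longrightarrow> (deriv ^^ k) g t = (\<Sum>j. (diffs ^^ k) c j * t^j)" for k
  proof (induction k)
    case 0 then show ?case using sm sums_unique by auto
  next
    case (Suc k)
    show ?case proof (intro allI impI)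
    fix t :: real assume t: "\<bar>t\<bar> < R"
    have K: "norm t < norm ((\<bar>t\<bar> + R)/2)" using t by auto
    have sK: "summable (\<lambda>j. (diffs ^^ k) c j * ((\<bar>t\<bar> + R)/2)^j)"
      by (rule summ) (use t in auto)
    have d: "DERIV (\<lambda>x. \<Sum>j. (diffs ^^ k) c j * x^j) t :> (\<Sum>j. diffs ((diffs ^^ k) c) j * t^j)"
      by (rule termdiffs_strong[OF sK K])
    have d2: "DERIV ((deriv ^^ k) g) t :> (\<Sum>j. diffs ((diffs ^^ k) c) j * t^j)"
      by (rule has_field_derivative_transform_within_open[OF d, of "{-R<..<R}"])
         (use t Suc in auto)
    show "(deriv ^^ Suc k) g t = (\<Sum>j. (diffs ^^ Suc k) c j * t^j)"
      using DERIV_imp_deriv[OF d2] by simp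
  qed
  qed
  have "(deriv ^^ k) g 0 = (\<Sum>j. (diffs ^^ k) c j * 0^j)" using main[of k] R by (metis abs_zero)
  also have "\<dots> = (diffs ^^ k) c 0" by (rule powser_zero)
  also have "\<dots> = fact k * c k" by (simp add: diffs_funpow)
  finally show ?thesis .
qed

definition deg :: "('n::finite \<Rightarrow> nat) \<Rightarrow> nat" where "deg \<alpha> = (\<Sum>i\<in>UNIV. \<alpha> i)"
definition mon :: "('n::finite \<Rightarrow> nat) \<Rightarrow> real^'n \<Rightarrow> real" where
  "mon \<alpha> x = (\<Prod>i\<in>UNIV. (x$i) ^ \<alpha> i)"
definition dmon :: "('n::finite \<Rightarrow> nat) \<Rightarrow> real^'n \<Rightarrow> real^'n \<Rightarrow> real" where
  "dmon \<alpha> x v = (\<Sum>j\<in>UNIV. (of_nat (\<alpha> j) * v$j * (x$j) ^ (\<alpha> j - 1)) * (\<Prod>i\<in>UNIV - {j}. (x$i) ^ \<alpha> i))"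

lemma finite_deg: "finite {\<alpha>::'n::finite\<Rightarrow>nat. deg \<alpha> = k}"
proof (rule finite_subset)
  show "{\<alpha>::'n\<Rightarrow>nat. deg \<alpha> = k} \<subseteq> PiE UNIV (\<lambda>_. {..k})"
  proof
    fix \<alpha> :: "'n \<Rightarrow> nat" assume "\<alpha> \<in> {\<alpha>. deg \<alpha> = k}"
    then have "\<alpha> i \<le> k" for i
      unfolding deg_def using member_le_sum[of i UNIV \<alpha>] by auto
    then show "\<alpha> \<in> PiE UNIV (\<lambda>_. {..k})" by auto
  qed
  show "finite (PiE (UNIV::'n set) (\<lambda>_. {..k}))" by (rule finite_PiE) auto
qed

lemma mon_scale: "mon \<alpha> (t *\<^sub>R x) = t ^ deg \<alpha> * mon \<alpha> x"
  unfolding mon_def deg_def by (simp add: power_mult_distrib prod.distrib power_sum)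

lemma mon_deriv: "(mon \<alpha> has_derivative dmon \<alpha> x) (at x)"
proof -
  have "((\<lambda>x. \<Prod>i\<in>UNIV. (x$i) ^ \<alpha> i) has_derivative
     (\<lambda>v. \<Sum>j\<in>UNIV. (of_nat (\<alpha> j) * v$j * (x$j) ^ (\<alpha> j - 1)) * (\<Prod>i\<in>UNIV - {j}. (x$i) ^ \<alpha> i))) (at x)"
    by (intro has_derivative_prod has_derivative_power bounded_linear_imp_has_derivative bounded_linear_vec_nth)
  then show ?thesis unfolding mon_def[abs_def] dmon_def[abs_def] .
qed

lemma continuous_dmon: "continuous_on UNIV (\<lambda>x. dmon \<alpha> x v)"
  unfolding dmon_def by (intro continuous_intros)

lemma group_has_sum:
  fixes h :: "('n::finite \<Rightarrow> nat) \<Rightarrow> real"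
  assumes "(h has_sum s) UNIV"
  shows "((\<lambda>k. \<Sum>\<alpha>\<in>{\<alpha>. deg \<alpha> = k}. h \<alpha>) has_sum s) UNIV"
proof -
  let ?A = "Sigma (UNIV::nat set) (\<lambda>k. {\<alpha>::'n\<Rightarrow>nat. deg \<alpha> = k})"
  have inj: "inj_on snd ?A" by (auto simp: inj_on_def)
  have im: "snd ` ?A = UNIV" by (auto simp: image_iff)
  have "((h \<circ> snd) has_sum s) ?A"
    using has_sum_reindex[OF inj, of h s] assms im by simp
  then have "((\<lambda>(k,\<alpha>). h \<alpha>) has_sum s) ?A" by (simp add: case_prod_beta' o_def)
  then show ?thesis
    by (rule has_sum_Sigma') (auto intro: has_sum_finiteI finite_deg)
qed


definition bk :: "(('n::finite \<Rightarrow> nat) \<Rightarrow> real) \<Rightarrow> nat \<Rightarrow> real^'n \<Rightarrow> real" where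
  "bk co k x = (\<Sum>\<alpha>\<in>{\<alpha>. deg \<alpha> = k}. co \<alpha> * mon \<alpha> x)"
definition Wp :: "(('n::finite \<Rightarrow> nat) \<Rightarrow> real) \<Rightarrow> nat \<Rightarrow> real^'n \<Rightarrow> real" where
  "Wp co p x = (\<Sum>k=2..p. bk co k x)"

lemma taylor_rep:
  fixes V :: "real^'n \<Rightarrow> real"
  assumes r: "r > 0"
    and hs: "\<forall>x\<in>ball 0 r. ((\<lambda>\<alpha>. (\<Prod>i\<in>UNIV. (x$i - (0::real^'n)$i) ^ \<alpha> i) *\<^sub>R co \<alpha>) has_sum V x) UNIV"
  shows "taylor_poly V p x = Wp co p x"
proof -
  define R where "R = r / (norm x + 1)"
  have nx: "norm x + 1 > 0" by (simp add: add_nonneg_pos)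
  have R: "R > 0" using r nx by (simp add: R_def)
  have sm: "(\<lambda>k. bk co k x * t^k) sums V (t *\<^sub>R x)" if t: "\<bar>t\<bar> < R" for t
  proof -
    have "norm (t *\<^sub>R x) = \<bar>t\<bar> * norm x" by simp
    also have "\<dots> \<le> \<bar>t\<bar> * (norm x + 1)" by (simp add: mult_left_mono)
    also have "\<dots> < R * (norm x + 1)" using t by (intro mult_strict_right_mono) (use nx in auto)
    also have "\<dots> = r" using nx by (simp add: R_def)
    finally have "t *\<^sub>R x \<in> ball 0 r" by simp
    with hs have "((\<lambda>\<alpha>. (\<Prod>i\<in>UNIV. ((t *\<^sub>R x)$i - (0::real^'n)$i) ^ \<alpha> i) *\<^sub>R co \<alpha>) has_sum V (t *\<^sub>R x)) UNIV"
      by blast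
    then have "((\<lambda>\<alpha>. mon \<alpha> (t *\<^sub>R x) * co \<alpha>) has_sum V (t *\<^sub>R x)) UNIV"
      unfolding mon_def by simp
    from group_has_sum[OF this]
    have "((\<lambda>k. \<Sum>\<alpha>\<in>{\<alpha>. deg \<alpha> = k}. mon \<alpha> (t *\<^sub>R x) * co \<alpha>) has_sum V (t *\<^sub>R x)) UNIV" .
    moreover have "(\<Sum>\<alpha>\<in>{\<alpha>. deg \<alpha> = k}. mon \<alpha> (t *\<^sub>R x) * co \<alpha>) = bk co k x * t^k" for k
    proof -
      have "(\<Sum>\<alpha>\<in>{\<alpha>. deg \<alpha> = k}. mon \<alpha> (t *\<^sub>R x) * co \<alpha>) = (\<Sum>\<alpha>\<in>{\<alpha>. deg \<alpha> = k}. co \<alpha> * mon \<alpha> x * t^k)"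
        by (rule sum.cong) (auto simp: mon_scale)
      then show ?thesis unfolding bk_def by (simp add: sum_distrib_right)
    qed
    ultimately show ?thesis by (simp add: has_sum_imp_sums)
  qed
  have d: "(deriv ^^ k) (\<lambda>t. V (t *\<^sub>R x)) 0 = fact k * bk co k x" for k
    by (rule powser_higher_deriv[OF R sm])
  show ?thesis unfolding taylor_poly_def Wp_def d by simp
qed

locale lyap =
  fixes W :: "'a::euclidean_space \<Rightarrow> real" and dW :: "'a \<Rightarrow> 'a \<Rightarrow> real" and G :: "'a set"
  assumes der: "\<And>x. (W has_derivative dW x) (at x)"
    and dcont: "\<And>v. continuous_on UNIV (\<lambda>x. dW x v)"
    and descdir: "\<And>y. y \<in> G \<Longrightarrow> y \<noteq> 0 \<Longrightarrow> \<exists>v. dW y v < 0"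
begin

lemma Wcont: "continuous_on S W"
  by (meson der continuous_at_imp_continuous_on has_derivative_continuous)

lemma lin: "linear (dW x)"
  using der has_derivative_linear by blast

lemma crit:
  assumes "y \<in> G" "y \<noteq> 0" "open D" "y \<in> D" "\<forall>w\<in>D. W y \<le> W w"
  shows False
proof -
  have "dW y = (\<lambda>v. 0)"
    by (rule differential_zero_maxmin[OF assms(4,3) der]) (use assms(5) in auto)
  then show False using descdir[OF assms(1,2)] by auto
qed

lemma descent:
  assumes "y \<in> G" "y \<noteq> 0" "e > 0"
  shows "\<exists>w. dist w y < e \<and> W w < W y"
proof (rule ccontr)
  assume "\<not> ?thesis"
  then have "\<forall>w\<in>ball y e. W y \<le> W w" by (force simp: dist_commute not_less)
  then show False using crit[OF assms(1,2) open_ball[of y e]] assms(3) by auto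
qed

lemma conn:
  assumes op: "open \<Omega>" and bd: "bounded \<Omega>" and z: "0 \<in> \<Omega>" and sub: "\<Omega> \<subseteq> G"
    and fr: "\<forall>w\<in>frontier \<Omega>. W w = d" and lt: "\<forall>w\<in>\<Omega>. W w < d"
  shows "connected \<Omega>"
proof (rule ccontr)
  assume nc: "\<not> connected \<Omega>"
  have "\<exists>y\<in>\<Omega>. y \<notin> connected_component_set \<Omega> 0"
  proof (rule ccontr)
    assume "\<not> ?thesis"
    then have "connected_component_set \<Omega> 0 = \<Omega>"
      using connected_component_subset by blast
    then show False using nc connected_connected_component by metis
  qed
  then obtain y where y: "y \<in> \<Omega>" "y \<notin> connected_component_set \<Omega> 0" by blast
  define D where "D = connected_component_set \<Omega> y"
  have Dop: "open D" unfolding D_def by (rule open_connected_component[OF op])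
  have DO: "D \<subseteq> \<Omega>" unfolding D_def by (rule connected_component_subset)
  have yD: "y \<in> D" unfolding D_def using y(1) by simp
  have z0: "0 \<notin> D" unfolding D_def using y(2)
    by (metis connected_component_sym mem_Collect_eq)
  have Dbd: "bounded D" using bd DO bounded_subset by blast
  have frD: "frontier D \<subseteq> frontier \<Omega>" unfolding D_def by (rule frontier_of_connected_component_subset)
  have cpt: "compact (closure D)" using Dbd by (simp add: compact_closure)
  obtain m where m: "m \<in> closure D" "\<forall>w\<in>closure D. W m \<le> W w"
    using continuous_attains_inf[OF cpt _ Wcont] yD closure_subset by blast
  have "W m \<le> W y" using m(2) yD closure_subset by blast
  also have "W y < d" using lt y(1) by blast
  finally have "W m < d" .
  then have "m \<notin> frontier D" using frD fr by auto
  then have mD: "m \<in> D" using m(1) Dop by (simp add: frontier_def interior_open)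
  show False
  proof (rule crit[OF _ _ Dop mD])
    show "m \<in> G" using mD DO sub by blast
    show "m \<noteq> 0" using mD z0 by blast
    show "\<forall>w\<in>D. W m \<le> W w" using m(2) closure_subset by blast
  qed
qed

lemma slide:
  fixes u :: 'a and \<rho> :: real
  assumes pos: "\<forall>p\<in>ball z \<rho>. 0 < dW p u"
    and w: "w \<in> ball z \<rho>" and ws: "w - s *\<^sub>R u \<in> ball z \<rho>" and s: "s > 0"
  shows "W (w - s *\<^sub>R u) < W w"
proof -
  have seg: "w - \<sigma> *\<^sub>R u \<in> ball z \<rho>" if "0 \<le> \<sigma>" "\<sigma> \<le> s" for \<sigma>
  proof -
    have "w - \<sigma> *\<^sub>R u = (1 - \<sigma>/s) *\<^sub>R w + (\<sigma>/s) *\<^sub>R (w - s *\<^sub>R u)"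
      using s by (simp add: algebra_simps)
    also have "\<dots> \<in> closed_segment w (w - s *\<^sub>R u)"
      unfolding in_segment using that s by (intro exI[of _ "\<sigma>/s"]) auto
    finally show ?thesis using closed_segment_subset[OF w ws convex_ball] by blast
  qed
  have "W (w - 0 *\<^sub>R u) > W (w - s *\<^sub>R u)"
  proof (rule DERIV_neg_imp_decreasing[OF s])
    fix \<sigma> :: real assume "0 \<le> \<sigma>" "\<sigma> \<le> s"
    define p where "p = w - \<sigma> *\<^sub>R u"
    have pb: "p \<in> ball z \<rho>" unfolding p_def using seg \<open>0 \<le> \<sigma>\<close> \<open>\<sigma> \<le> s\<close> by blast
    have g: "((\<lambda>\<sigma>. w - \<sigma> *\<^sub>R u) has_derivative (\<lambda>h. - (h *\<^sub>R u))) (at \<sigma>)"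
      by (auto intro!: derivative_eq_intros)
    have c: "((\<lambda>\<sigma>. W (w - \<sigma> *\<^sub>R u)) has_derivative (\<lambda>h. dW p (- (h *\<^sub>R u)))) (at \<sigma>)"
      unfolding p_def by (rule has_derivative_compose[OF g der])
    have e: "(\<lambda>h. dW p (- (h *\<^sub>R u))) = (\<lambda>h. (- dW p u) * h)"
      using lin[of p] by (auto simp: linear_neg linear_cmul)
    have "((\<lambda>\<sigma>. W (w - \<sigma> *\<^sub>R u)) has_field_derivative (- dW p u)) (at \<sigma>)"
      using c unfolding e has_field_derivative_def by (simp add: mult.commute)
    then show "\<exists>y. ((\<lambda>\<sigma>. W (w - \<sigma> *\<^sub>R u)) has_field_derivative y) (at \<sigma>) \<and> y < 0"
      using pos pb by auto
  qed
  then show ?thesis by simp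
qed

lemma cyl:
  assumes zG: "z \<in> G" "z \<noteq> 0"
  shows "\<exists>N. open N \<and> z \<in> N \<and> connected (N \<inter> {w. W w < W z})"
proof -
  obtain v where v: "dW z v < 0" using descdir zG by blast
  have v0: "v \<noteq> 0" using v lin[of z] linear_0 by force
  define u where "u = (- 1 / norm v) *\<^sub>R v"
  have nu: "norm u = 1" using v0 by (simp add: u_def)
  have uu: "u \<bullet> u = 1" using nu by (metis power2_norm_eq_inner power_one)
  have dzu: "0 < dW z u"
  proof -
    have "dW z u = (- 1 / norm v) * dW z v" unfolding u_def using linear_cmul[OF lin[of z], of "- 1 / norm v" v] by simp
    then show ?thesis using v v0 by (simp add: divide_neg_pos)
  qed
  have opP: "open {w. (\<lambda>_. 0::real) w < dW w u}"
    by (rule open_Collect_less) (auto intro: continuous_on_const dcont)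
  obtain \<rho> where \<rho>: "\<rho> > 0" "ball z \<rho> \<subseteq> {w. 0 < dW w u}"
  proof -
    have "open {w. 0 < dW w u}" using opP by simp
    moreover have "z \<in> {w. 0 < dW w u}" using dzu by simp
    ultimately show ?thesis using that unfolding open_contains_ball by blast
  qed
  have pos: "\<forall>p\<in>ball z \<rho>. 0 < dW p u" using \<rho> by blast
  define b where "b = \<rho>/2"
  have b: "b > 0" using \<rho> by (simp add: b_def)
  define q where "q = z - (b/2) *\<^sub>R u"
  have qb: "q \<in> ball z \<rho>" using \<rho> nu by (simp add: q_def b_def dist_norm)
  have zb: "z \<in> ball z \<rho>" using \<rho> by simp
  have Wq: "W q < W z"
    unfolding q_def by (rule slide[OF pos zb]) (use qb b in \<open>auto simp: q_def\<close>)
  have opL: "open {w. W w < (\<lambda>_. W z) w}"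
    by (rule open_Collect_less) (auto intro: continuous_on_const Wcont)
  obtain a where a: "a > 0" "ball q a \<subseteq> {w. W w < W z}"
  proof -
    have "open {w. W w < W z}" using opL by simp
    moreover have "q \<in> {w. W w < W z}" using Wq by simp
    ultimately show ?thesis using that unfolding open_contains_ball by blast
  qed
  define a' where "a' = min a (\<rho>/4)"
  have a': "a' > 0" "a' \<le> a" "a' \<le> \<rho>/4" using a \<rho> by (auto simp: a'_def)
  define pr where "pr w = (w - z) - ((w - z) \<bullet> u) *\<^sub>R u" for w
  define N where "N = {w. norm (pr w) < a' \<and> \<bar>(w - z) \<bullet> u\<bar> < b}"
  define T where "T = {w. norm (pr w) < a' \<and> - b < (w - z) \<bullet> u \<and> (w - z) \<bullet> u < - b/2}"
  define M where "M = N \<inter> {w. W w < W z}"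
  have decomp: "w = z + pr w + ((w - z) \<bullet> u) *\<^sub>R u" for w by (simp add: pr_def)
  have prperp: "pr w \<bullet> u = 0" for w using uu by (simp add: pr_def inner_diff_left)
  have coord1: "pr (z + y + c *\<^sub>R u) = y" if "y \<bullet> u = 0" for y c
    using that uu by (simp add: pr_def inner_add_left algebra_simps)
  have coord2: "((z + y + c *\<^sub>R u) - z) \<bullet> u = c" if "y \<bullet> u = 0" for y c
    using that uu by (simp add: inner_add_left)
  have vert1: "pr (w - t *\<^sub>R u) = pr w" for w t
    using uu by (simp add: pr_def inner_diff_left algebra_simps)
  have vert2: "((w - t *\<^sub>R u) - z) \<bullet> u = (w - z) \<bullet> u - t" for w t
    using uu by (simp add: inner_diff_left algebra_simps)
  have Nball: "w \<in> ball z \<rho>" if "w \<in> N" for w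
  proof -
    have "dist z w = norm (pr w + ((w - z) \<bullet> u) *\<^sub>R u)"
      by (simp add: pr_def dist_norm norm_minus_commute)
    also have "\<dots> \<le> norm (pr w) + \<bar>(w - z) \<bullet> u\<bar>" using nu norm_triangle_ineq[of "pr w" "((w - z) \<bullet> u) *\<^sub>R u"] by simp
    also have "\<dots> < a' + b" using that by (simp add: N_def add_strict_mono)
    also have "\<dots> < \<rho>" using a' \<rho> by (simp add: b_def)
    finally show ?thesis by simp
  qed
  have contpr: "continuous_on UNIV pr" unfolding pr_def by (intro continuous_intros)
  have Nopen: "open N"
  proof -
    have o1: "open {w. norm (pr w) < (\<lambda>_. a') w}"
      by (rule open_Collect_less) (auto intro!: continuous_intros contpr)
    have o2: "open {w. \<bar>(w - z) \<bullet> u\<bar> < (\<lambda>_. b) w}"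
      by (rule open_Collect_less) (auto intro!: continuous_intros)
    have "N = {w. norm (pr w) < (\<lambda>_. a') w} \<inter> {w. \<bar>(w - z) \<bullet> u\<bar> < (\<lambda>_. b) w}"
      by (auto simp: N_def)
    then show ?thesis using o1 o2 by auto
  qed
  have zN: "z \<in> N" using a' b by (simp add: N_def pr_def)
  have TM: "T \<subseteq> M"
  proof
    fix w assume wT: "w \<in> T"
    have wN: "w \<in> N" using wT by (auto simp: T_def N_def)
    define w' where "w' = z + pr w + (- b/2) *\<^sub>R u"
    have w'q: "w' \<in> ball q a"
      using wT a' by (simp add: T_def w'_def q_def dist_norm)
    have Ww': "W w' < W z" using w'q a by blast
    have p1: "pr w' = pr w" unfolding w'_def by (rule coord1[OF prperp])
    have p2: "(w' - z) \<bullet> u = - b/2" unfolding w'_def by (rule coord2[OF prperp])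
    have w'N: "w' \<in> N" using p1 p2 wT b by (simp add: N_def T_def)
    define t where "t = - ((w - z) \<bullet> u) - b/2"
    have t: "t > 0" using wT by (simp add: T_def t_def)
    have ww': "w = w' - t *\<^sub>R u"
      by (subst decomp[of w]) (simp add: w'_def t_def algebra_simps)
    have "W w < W w'" unfolding ww' by (rule slide[OF pos Nball[OF w'N] _ t]) (use ww' wN Nball in auto)
    then show "w \<in> M" using Ww' wN by (simp add: M_def)
  qed
  have Tconv: "convex T"
    unfolding convex_alt
  proof (intro ballI allI impI)
    fix x y and t :: real assume xT: "x \<in> T" and yT: "y \<in> T" and t: "0 \<le> t \<and> t \<le> 1"
    have e1: "pr ((1 - t) *\<^sub>R x + t *\<^sub>R y) = (1 - t) *\<^sub>R pr x + t *\<^sub>R pr y"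
      by (simp add: pr_def algebra_simps inner_add_left inner_diff_left)
    have e2: "((1 - t) *\<^sub>R x + t *\<^sub>R y - z) \<bullet> u = (1 - t) * ((x - z) \<bullet> u) + t * ((y - z) \<bullet> u)"
      by (simp add: algebra_simps inner_add_left inner_diff_left)
    have "norm ((1 - t) *\<^sub>R pr x + t *\<^sub>R pr y) \<le> (1 - t) * norm (pr x) + t * norm (pr y)"
      using t norm_triangle_ineq[of "(1 - t) *\<^sub>R pr x" "t *\<^sub>R pr y"] by simp
    also have "\<dots> < a'"
    proof -
      have "(1 - t) * norm (pr x) \<le> (1 - t) * a'" using t xT by (intro mult_left_mono) (auto simp: T_def)
      moreover have "t * norm (pr y) \<le> t * a'" using t yT by (intro mult_left_mono) (auto simp: T_def)
      moreover have "(1 - t) * norm (pr x) < (1 - t) * a' \<or> t * norm (pr y) < t * a'"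
        using t xT yT by (cases "t = 1") (auto simp: T_def)
      ultimately show ?thesis by (auto simp: algebra_simps)
    qed
    finally have n: "norm (pr ((1 - t) *\<^sub>R x + t *\<^sub>R y)) < a'" using e1 by simp
    have i1: "- b < (1 - t) * ((x - z) \<bullet> u) + t * ((y - z) \<bullet> u)"
    proof -
      have "(1 - t) * (- b) \<le> (1 - t) * ((x - z) \<bullet> u)" using t xT by (intro mult_left_mono) (auto simp: T_def)
      moreover have "t * (- b) \<le> t * ((y - z) \<bullet> u)" using t yT by (intro mult_left_mono) (auto simp: T_def)
      moreover have "(1 - t) * (- b) < (1 - t) * ((x - z) \<bullet> u) \<or> t * (- b) < t * ((y - z) \<bullet> u)"
      proof (cases "t = 1")
        case True then show ?thesis using yT by (simp add: T_def)
      next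
        case False then have "0 < 1 - t" using t by simp
        then show ?thesis by (intro disjI1 mult_strict_left_mono) (use xT in \<open>auto simp: T_def\<close>)
      qed
      ultimately show ?thesis by (auto simp: algebra_simps)
    qed
    have i2: "(1 - t) * ((x - z) \<bullet> u) + t * ((y - z) \<bullet> u) < - b/2"
    proof -
      have "(1 - t) * ((x - z) \<bullet> u) \<le> (1 - t) * (- b/2)" using t xT by (intro mult_left_mono) (auto simp: T_def)
      moreover have "t * ((y - z) \<bullet> u) \<le> t * (- b/2)" using t yT by (intro mult_left_mono) (auto simp: T_def)
      moreover have "(1 - t) * ((x - z) \<bullet> u) < (1 - t) * (- b/2) \<or> t * ((y - z) \<bullet> u) < t * (- b/2)"
      proof (cases "t = 1")
        case True then show ?thesis using yT by (simp add: T_def)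
      next
        case False then have "0 < 1 - t" using t by simp
        then show ?thesis by (intro disjI1 mult_strict_left_mono) (use xT in \<open>auto simp: T_def\<close>)
      qed
      moreover have "(1 - t) * (- b/2) + t * (- b/2) = - b/2" by (simp add: algebra_simps)
      ultimately show ?thesis by linarith
    qed
    show "(1 - t) *\<^sub>R x + t *\<^sub>R y \<in> T" using n i1 i2 e2 by (simp add: T_def)
  qed
  define q2 where "q2 = z - (3*b/4) *\<^sub>R u"
  have q2T: "q2 \<in> T"
  proof -
    have "q2 = z + 0 + (- (3*b/4)) *\<^sub>R u" by (simp add: q2_def)
    then show ?thesis using coord1[of 0 "- (3*b/4)"] coord2[of 0 "- (3*b/4)"] a' b by (simp add: T_def)
  qed
  define sh where "sh w = (w - z) \<bullet> u + 3*b/4" for w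
  define C where "C w = (if (w - z) \<bullet> u < - b/2 then T else closed_segment w (w - sh w *\<^sub>R u) \<union> T)" for w
  have segM: "closed_segment w (w - sh w *\<^sub>R u) \<subseteq> M" if wM: "w \<in> M" and nT: "\<not> (w - z) \<bullet> u < - b/2" for w
  proof
    fix x assume "x \<in> closed_segment w (w - sh w *\<^sub>R u)"
    then obtain \<theta> where th: "0 \<le> \<theta>" "\<theta> \<le> 1" "x = (1 - \<theta>) *\<^sub>R w + \<theta> *\<^sub>R (w - sh w *\<^sub>R u)"
      unfolding in_segment by blast
    have shp: "sh w > 0" using nT b by (simp add: sh_def)
    have x: "x = w - (\<theta> * sh w) *\<^sub>R u" using th(3) by (simp add: algebra_simps)
    have wN: "w \<in> N" using wM by (simp add: M_def)
    have ts: "\<theta> * sh w \<le> sh w" using th shp by (simp add: mult_left_le_one_le)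
    have ts0: "0 \<le> \<theta> * sh w" using th shp by simp
    have px: "pr x = pr w" unfolding x by (rule vert1)
    have ix: "(x - z) \<bullet> u = (w - z) \<bullet> u - \<theta> * sh w" unfolding x by (rule vert2)
    have shd: "sh w = (w - z) \<bullet> u + 3*b/4" by (simp add: sh_def)
    have "\<bar>(w - z) \<bullet> u\<bar> < b" "norm (pr w) < a'" using wN by (auto simp: N_def)
    then have xN: "x \<in> N" unfolding N_def using px ix shd ts ts0 b by (simp add: abs_less_iff)
    have "W x \<le> W w"
    proof (cases "\<theta> * sh w = 0")
      case True then show ?thesis unfolding x by (metis diff_zero order_refl scale_zero_left)
    next
      case False
      then have "0 < \<theta> * sh w" using ts0 by linarith
      then show ?thesis unfolding x using slide[OF pos Nball[OF wN] _] Nball xN x by (meson less_imp_le)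
    qed
    then show "x \<in> M" using wM xN by (simp add: M_def)
  qed
  have U: "\<Union>(C ` M) = M"
  proof
    show "\<Union>(C ` M) \<subseteq> M" using TM segM by (auto simp: C_def split: if_splits)
    show "M \<subseteq> \<Union>(C ` M)"
    proof
      fix w assume wM: "w \<in> M"
      have "w \<in> C w"
      proof (cases "(w - z) \<bullet> u < - b/2")
        case True
        then have "w \<in> T" using wM by (auto simp: M_def N_def T_def)
        then show ?thesis using True by (simp add: C_def)
      qed (simp add: C_def)
      then show "w \<in> \<Union>(C ` M)" using wM by blast
    qed
  qed
  have Cc: "connected (C w)" if "w \<in> M" for w
  proof (cases "(w - z) \<bullet> u < - b/2")
    case True then show ?thesis using Tconv convex_connected by (simp add: C_def)
  next
    case False
    have sh3: "sh w = (w - z) \<bullet> u + 3*b/4" by (simp add: sh_def)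
    have endT: "w - sh w *\<^sub>R u \<in> T"
      using that b unfolding T_def by (simp add: M_def N_def vert1 vert2 sh3 abs_less_iff)
    have "connected (closed_segment w (w - sh w *\<^sub>R u) \<union> T)"
      by (rule connected_Un) (use Tconv convex_connected endT in auto)
    then show ?thesis using False by (simp add: C_def)
  qed
  have "connected (\<Union>(C ` M))"
  proof (rule connected_Union)
    show "\<And>s. s \<in> C ` M \<Longrightarrow> connected s" using Cc by blast
    show "\<Inter>(C ` M) \<noteq> {}" using q2T by (auto simp: C_def)
  qed
  then have "connected M" using U by simp
  then show ?thesis using Nopen zN by (auto simp: M_def)
qed

definition adm :: "real \<Rightarrow> 'a set \<Rightarrow> bool" where
  "adm c S \<longleftrightarrow> closed S \<and> connected S \<and> 0 \<in> interior S \<and> (\<forall>x\<in>interior S. W x < c) \<and>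
     (\<forall>x\<in>frontier S. W x = c) \<and> compact S \<and> S \<subseteq> G"

lemma adm_le:
  assumes "adm c S" "x \<in> S" shows "W x \<le> c"
proof -
  have "x \<in> interior S \<or> x \<in> frontier S"
    using assms by (auto simp: adm_def frontier_def closure_closed)
  then show ?thesis using assms by (auto simp: adm_def less_imp_le)
qed

lemma adm_int_conn:
  assumes "adm c S" shows "connected (interior S)"
proof (rule conn[of _ c])
  show "bounded (interior S)" using assms compact_imp_bounded interior_subset bounded_subset
    unfolding adm_def by metis
  show "\<forall>w\<in>frontier (interior S). W w = c" using assms frontier_interior_subset unfolding adm_def by blast
qed (use assms interior_subset[of S] in \<open>auto simp: adm_def\<close>)

lemma adm_int_sub:
  assumes a1: "adm c S1" and a2: "adm c S2" shows "interior S1 \<subseteq> interior S2"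
proof (rule ccontr)
  assume "\<not> ?thesis"
  then have "interior S1 - interior S2 \<noteq> {}" by blast
  moreover have "interior S1 \<inter> interior S2 \<noteq> {}" using a1 a2 by (auto simp: adm_def)
  ultimately have "interior S1 \<inter> frontier (interior S2) \<noteq> {}"
    using connected_Int_frontier[OF adm_int_conn[OF a1]] by blast
  then obtain w where "w \<in> interior S1" "w \<in> frontier S2"
    using frontier_interior_subset by blast
  then show False using a1 a2 by (force simp: adm_def)
qed

lemma adm_closure:
  assumes a: "adm c S" shows "S = closure (interior S)"
proof -
  define Oi where "Oi = interior S"
  have clS: "closed S" using a by (simp add: adm_def)
  have OS: "closure Oi \<subseteq> S" unfolding Oi_def using clS interior_subset closure_minimal by blast
  have "S \<subseteq> closure Oi"
  proof (rule ccontr)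
    assume "\<not> S \<subseteq> closure Oi"
    define H where "H = S - closure Oi"
    have Hne: "H \<noteq> {}" using \<open>\<not> S \<subseteq> closure Oi\<close> by (auto simp: H_def)
    have Oi0: "0 \<in> Oi" using a by (simp add: adm_def Oi_def)
    have "\<exists>z. z \<in> closure Oi \<inter> closure H \<inter> S"
    proof (rule ccontr)
      assume nz: "\<not> ?thesis"
      have "\<exists>e1 e2. closed e1 \<and> closed e2 \<and> S \<subseteq> e1 \<union> e2 \<and> e1 \<inter> e2 \<inter> S = {} \<and> e1 \<inter> S \<noteq> {} \<and> e2 \<inter> S \<noteq> {}"
      proof (intro exI conjI)
        show "S \<subseteq> closure Oi \<union> closure H" using closure_subset[of H] by (auto simp: H_def)
        show "closure Oi \<inter> closure H \<inter> S = {}" using nz by blast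
        show "closure Oi \<inter> S \<noteq> {}" using Oi0 closure_subset OS by blast
        show "closure H \<inter> S \<noteq> {}" using Hne closure_subset[of H] by (auto simp: H_def)
      qed auto
      then show False using a connected_closed[of S] by (auto simp: adm_def)
    qed
    then obtain z where z: "z \<in> closure Oi" "z \<in> closure H" "z \<in> S" by blast
    have opO: "open Oi" by (simp add: Oi_def)
    have "z \<notin> Oi"
    proof
      assume "z \<in> Oi"
      then have "Oi \<inter> closure H \<noteq> {}" using z by blast
      then have "Oi \<inter> H \<noteq> {}" using open_Int_closure_eq_empty[OF opO] by blast
      then show False using closure_subset[of Oi] by (auto simp: H_def)
    qed
    then have zfr: "z \<in> frontier S" using z clS by (simp add: Oi_def frontier_def closure_closed)
    have Wz: "W z = c" using zfr a by (simp add: adm_def)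
    have zG: "z \<in> G" using z a by (auto simp: adm_def)
    have z0: "z \<noteq> 0" using Oi0 \<open>z \<notin> Oi\<close> by blast
    obtain N where N: "open N" "z \<in> N" "connected (N \<inter> {w. W w < W z})" using cyl[OF zG z0] by blast
    define M where "M = N \<inter> {w. W w < W z}"
    have "N \<inter> closure Oi \<noteq> {}" using N z by blast
    then have "N \<inter> Oi \<noteq> {}" using open_Int_closure_eq_empty[OF N(1)] by blast
    then obtain ob where ob: "ob \<in> N" "ob \<in> Oi" by blast
    have "W ob < c" using ob a by (simp add: adm_def Oi_def)
    then have obM: "ob \<in> M" using ob Wz by (simp add: M_def)
    have MO: "M \<subseteq> Oi"
    proof (rule ccontr)
      assume "\<not> M \<subseteq> Oi"
      then have "M - Oi \<noteq> {}" by blast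
      moreover have "M \<inter> Oi \<noteq> {}" using obM ob by blast
      ultimately have "M \<inter> frontier Oi \<noteq> {}"
        using connected_Int_frontier[of M Oi] N(3) by (simp add: M_def)
      then obtain w where "w \<in> M" "w \<in> frontier S"
        using frontier_interior_subset unfolding Oi_def by blast
      then show False using a Wz by (auto simp: adm_def M_def)
    qed
    have "N \<inter> closure H \<noteq> {}" using N z by blast
    then have "N \<inter> H \<noteq> {}" using open_Int_closure_eq_empty[OF N(1)] by blast
    then obtain h where h: "h \<in> N" "h \<in> H" by blast
    have hS: "h \<in> S" "h \<notin> closure Oi" using h by (auto simp: H_def)
    have "h \<notin> Oi" using hS closure_subset by blast
    then have hfr: "h \<in> frontier S" using hS clS by (simp add: Oi_def frontier_def closure_closed)
    have Wh: "W h = c" using hfr a by (simp add: adm_def)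
    have hG: "h \<in> G" using hS a by (auto simp: adm_def)
    have h0: "h \<noteq> 0" using Oi0 \<open>h \<notin> Oi\<close> by blast
    obtain e where e: "e > 0" "ball h e \<subseteq> N" using N(1) h(1) open_contains_ball by blast
    have "h \<in> closure Oi"
      unfolding closure_approachable
    proof (intro allI impI)
      fix \<epsilon> :: real assume "\<epsilon> > 0"
      then obtain w where w: "dist w h < min \<epsilon> e" "W w < W h"
        using descent[OF hG h0, of "min \<epsilon> e"] e by auto
      have "w \<in> N" using w e by (auto simp: dist_commute)
      then have "w \<in> M" using w Wh Wz by (simp add: M_def)
      then show "\<exists>y\<in>Oi. dist y h < \<epsilon>" using MO w by force
    qed
    then show False using hS by blast
  qed
  then show ?thesis using OS by (auto simp: Oi_def)
qed

lemma adm_unique: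
  assumes "adm c S1" "adm c S2" shows "S1 = S2"
proof -
  have "interior S1 = interior S2" using adm_int_sub assms by blast
  then show ?thesis using adm_closure assms by metis
qed

lemma radial:
  assumes admc: "adm c S" and starS: "\<forall>x\<in>S. \<forall>t\<in>{0..<1::real}. t *\<^sub>R x \<in> interior S"
    and levels: "\<forall>c'\<in>{0<..c}. \<exists>S'. adm c' S' \<and> (\<forall>x\<in>S'. \<forall>t\<in>{0..<1::real}. t *\<^sub>R x \<in> interior S')"
    and Gpos: "\<forall>y\<in>G. y \<noteq> 0 \<longrightarrow> W y > 0" and W0: "W 0 = 0"
    and x: "x \<in> S" "x \<noteq> 0" and l: "0 \<le> l1" "l1 < l2" "l2 \<le> 1"
  shows "W (l1 *\<^sub>R x) < W (l2 *\<^sub>R x)"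
proof -
  define y where "y = l2 *\<^sub>R x"
  have yS: "y \<in> S"
  proof (cases "l2 = 1")
    case True then show ?thesis using x by (simp add: y_def)
  next
    case False then show ?thesis using starS x l interior_subset by (force simp: y_def)
  qed
  have y0: "y \<noteq> 0" using x l by (simp add: y_def)
  have yG: "y \<in> G" using yS admc by (auto simp: adm_def)
  define c' where "c' = W y"
  have c'pos: "c' > 0" using Gpos yG y0 by (simp add: c'_def)
  have c'le: "c' \<le> c" using adm_le[OF admc yS] by (simp add: c'_def)
  obtain S' where S': "adm c' S'" "\<forall>x\<in>S'. \<forall>t\<in>{0..<1::real}. t *\<^sub>R x \<in> interior S'"
    using levels c'pos c'le by force
  have yS': "y \<in> S'"
  proof (cases "c' = c")
    case True
    then have "S' = S" using adm_unique S'(1) admc by simp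
    then show ?thesis using yS by simp
  next
    case False
    then have lt: "c' < c" using c'le by simp
    define \<Omega> where "\<Omega> = interior S \<inter> {w. W w < c'}"
    have opL: "open {w. W w < (\<lambda>_. c') w}"
      by (rule open_Collect_less) (auto intro: continuous_on_const Wcont)
    have opO: "open \<Omega>" unfolding \<Omega>_def using opL by auto
    have bdS: "bounded S" using admc compact_imp_bounded by (auto simp: adm_def)
    have bdO: "bounded \<Omega>" using bdS interior_subset bounded_subset unfolding \<Omega>_def by (metis inf.coboundedI1)
    have O0: "0 \<in> \<Omega>" using admc W0 c'pos by (simp add: \<Omega>_def adm_def)
    have OG: "\<Omega> \<subseteq> G" using admc interior_subset[of S] by (auto simp: \<Omega>_def adm_def)
    have frO: "\<forall>w\<in>frontier \<Omega>. W w = c'"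
    proof
      fix w assume wf: "w \<in> frontier \<Omega>"
      have wcl: "w \<in> closure \<Omega>" using wf by (simp add: frontier_def)
      have wnot: "w \<notin> \<Omega>" using wf opO by (simp add: frontier_def interior_open)
      have clle: "closed {w. W w \<le> c'}"
        by (rule closed_Collect_le) (auto intro: continuous_on_const Wcont)
      have "closure \<Omega> \<subseteq> {w. W w \<le> c'}"
        by (rule closure_minimal) (use clle in \<open>auto simp: \<Omega>_def\<close>)
      then have le: "W w \<le> c'" using wcl by blast
      have "closure \<Omega> \<subseteq> S"
        by (rule closure_minimal) (use admc interior_subset[of S] in \<open>auto simp: \<Omega>_def adm_def\<close>)
      then have wS: "w \<in> S" using wcl by blast
      show "W w = c'"
      proof (rule ccontr)
        assume "W w \<noteq> c'"
        then have wl: "W w < c'" using le by simp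
        then have "w \<notin> frontier S" using admc lt by (auto simp: adm_def)
        then have "w \<in> interior S" using wS admc by (auto simp: adm_def frontier_def closure_closed)
        then show False using wnot wl by (simp add: \<Omega>_def)
      qed
    qed
    have ltO: "\<forall>w\<in>\<Omega>. W w < c'" by (simp add: \<Omega>_def)
    have cO: "connected \<Omega>" by (rule conn[OF opO bdO O0 OG frO ltO])
    have OS': "\<Omega> \<subseteq> S'"
    proof (rule ccontr)
      assume "\<not> \<Omega> \<subseteq> S'"
      then have "\<Omega> - S' \<noteq> {}" by blast
      moreover have "\<Omega> \<inter> S' \<noteq> {}" using O0 S'(1) interior_subset by (force simp: adm_def)
      ultimately have "\<Omega> \<inter> frontier S' \<noteq> {}" using connected_Int_frontier[OF cO] by blast
      then show False using S'(1) ltO by (force simp: adm_def)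
    qed
    have yint: "y \<in> interior S"
    proof -
      have "y \<notin> frontier S" using admc lt by (auto simp: adm_def c'_def)
      then show ?thesis using yS admc by (auto simp: adm_def frontier_def closure_closed)
    qed
    obtain e where e: "e > 0" "ball y e \<subseteq> interior S"
      using yint open_contains_ball open_interior by blast
    have "y \<in> closure \<Omega>"
      unfolding closure_approachable
    proof (intro allI impI)
      fix \<epsilon> :: real assume "\<epsilon> > 0"
      then obtain w where w: "dist w y < min \<epsilon> e" "W w < W y"
        using descent[OF yG y0, of "min \<epsilon> e"] e by auto
      have "w \<in> interior S" using w e by (auto simp: dist_commute)
      then have "w \<in> \<Omega>" using w by (simp add: \<Omega>_def c'_def)
      then show "\<exists>z\<in>\<Omega>. dist z y < \<epsilon>" using w by force
    qed
    moreover have "closure \<Omega> \<subseteq> S'" using OS' S'(1) closure_minimal by (auto simp: adm_def)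
    ultimately show ?thesis by blast
  qed
  have "(l1 / l2) *\<^sub>R y \<in> interior S'"
    using S'(2) yS' l by (auto simp: divide_less_eq)
  moreover have "(l1 / l2) *\<^sub>R y = l1 *\<^sub>R x" using l by (simp add: y_def)
  ultimately have "W (l1 *\<^sub>R x) < c'" using S'(1) by (auto simp: adm_def)
  then show ?thesis by (simp add: c'_def y_def)
qed

end

theorem theorem2p6:
  fixes f :: "real^'n \<Rightarrow> real^'n" and A :: "real^'n^'n"
    and V :: "real^'n \<Rightarrow> real" and U :: "(real^'n) set" and p :: nat and c :: real
  assumes f_an: "real_analytic_on f UNIV" and f0: "f 0 = 0"
    and A_def: "(f has_derivative (\<lambda>h. A *v h)) (at 0)"
    and A_stable: "\<forall>\<mu>. cplx_eigenvalue A \<mu> \<longrightarrow> Re \<mu> < 0"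
    and U: "open U" "0 \<in> U"
    and V_an: "real_analytic_on V U" and V0: "V 0 = 0"
    and V_eq: "\<forall>x\<in>U. V differentiable (at x) \<and> frechet_derivative V (at x) (f x) = - ((norm x)\<^sup>2)"
    and p: "p \<ge> 2" and c: "c > 0"
    and N_exists: "\<exists>S. admissible f V p c S"
    and star: "\<forall>c'\<in>{0<..c}. (\<exists>S. admissible f V p c' S) \<and> star_prop (Nset f V p c')"
  shows "\<forall>x\<in>Nset f V p c - {0}. \<forall>l1 l2. 0 \<le> l1 \<and> l1 < l2 \<and> l2 \<le> 1 \<longrightarrow>
           taylor_poly V p (l1 *\<^sub>R x) < taylor_poly V p (l2 *\<^sub>R x)"
proof -
  obtain r co where r: "r > 0"
    and hs: "\<forall>x\<in>ball 0 r. ((\<lambda>\<alpha>. (\<Prod>i\<in>UNIV. (x$i - (0::real^'n)$i) ^ \<alpha> i) *\<^sub>R co \<alpha>) has_sum V x) UNIV"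
    using V_an U(2) unfolding real_analytic_on_def by blast
  have Weq: "taylor_poly V p = Wp co p" by (rule ext, rule taylor_rep[OF r hs])
  define dW where "dW x v = (\<Sum>k=2..p. \<Sum>\<alpha>\<in>{\<alpha>. deg \<alpha> = k}. co \<alpha> * dmon \<alpha> x v)" for x v :: "real^'n"
  have der: "(taylor_poly V p has_derivative dW x) (at x)" for x
    unfolding Weq Wp_def bk_def dW_def[abs_def]
    by (intro has_derivative_sum has_derivative_mult_right mon_deriv)
  have dcont: "continuous_on UNIV (\<lambda>x. dW x v)" for v
    unfolding dW_def by (intro continuous_on_sum continuous_on_mult continuous_on_const continuous_dmon)
  have Gp_prop: "taylor_poly V p y > 0 \<and> orbital_deriv f (taylor_poly V p) y < 0"
    if "y \<in> Gp f V p" "y \<noteq> 0" for y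
    using that unfolding Gp_def by blast
  have descdir: "\<exists>v. dW y v < 0" if "y \<in> Gp f V p" "y \<noteq> 0" for y
  proof -
    have "orbital_deriv f (taylor_poly V p) y < 0" using Gp_prop that by blast
    then have "frechet_derivative (taylor_poly V p) (at y) (f y) < 0" by (simp add: orbital_deriv_def)
    then have "dW y (f y) < 0" using frechet_derivative_at[OF der[of y]] by simp
    then show ?thesis by blast
  qed
  interpret L: lyap "taylor_poly V p" dW "Gp f V p"
    by unfold_locales (use der dcont descdir in auto)
  have admeq: "admissible f V p c' S \<longleftrightarrow> L.adm c' S" for c' S
    unfolding admissible_def L.adm_def by simp
  have Nset_eq: "Nset f V p c' = S" if "admissible f V p c' S" for c' S
    unfolding Nset_def
  proof (rule the_equality)
    show "admissible f V p c' S" by (rule that)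
    show "S' = S" if "admissible f V p c' S'" for S'
      using L.adm_unique that \<open>admissible f V p c' S\<close> admeq by blast
  qed
  have W0: "taylor_poly V p 0 = 0"
  proof -
    have "bk co k 0 = 0" if "k \<in> {2..p}" for k
    proof -
      have "mon \<alpha> 0 = 0" if "deg \<alpha> = k" for \<alpha>
        using mon_scale[of \<alpha> 0 0] that \<open>k \<in> {2..p}\<close> by (cases k) auto
      then show ?thesis unfolding bk_def by (intro sum.neutral) auto
    qed
    then show ?thesis unfolding Weq Wp_def by simp
  qed
  have Gpos: "\<forall>y\<in>Gp f V p. y \<noteq> 0 \<longrightarrow> taylor_poly V p y > 0" using Gp_prop by blast
  obtain S where S: "admissible f V p c S" using N_exists by blast
  have NS: "Nset f V p c = S" using Nset_eq[OF S] .
  have starS: "\<forall>x\<in>S. \<forall>t\<in>{0..<1::real}. t *\<^sub>R x \<in> interior S"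
    using star c NS unfolding star_prop_def by auto
  have levels: "\<forall>c'\<in>{0<..c}. \<exists>S'. L.adm c' S' \<and> (\<forall>x\<in>S'. \<forall>t\<in>{0..<1::real}. t *\<^sub>R x \<in> interior S')"
  proof
    fix c' assume c': "c' \<in> {0<..c}"
    obtain S' where S': "admissible f V p c' S'" using star c' by blast
    have "star_prop S'" using star c' Nset_eq[OF S'] by auto
    then show "\<exists>S'. L.adm c' S' \<and> (\<forall>x\<in>S'. \<forall>t\<in>{0..<1::real}. t *\<^sub>R x \<in> interior S')"
      using S' admeq unfolding star_prop_def by blast
  qed
  show ?thesis
  proof (intro ballI allI impI)
    fix x l1 l2 assume x: "x \<in> Nset f V p c - {0}" and l: "0 \<le> l1 \<and> l1 < l2 \<and> l2 \<le> (1::real)"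
    show "taylor_poly V p (l1 *\<^sub>R x) < taylor_poly V p (l2 *\<^sub>R x)"
      by (rule L.radial[of c S]) (use S admeq starS levels Gpos W0 x NS l in auto)
  qed
qed

end
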